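(* Let $G_3$ be the graph with vertices $v_1,\dots,v_8$ and edges $a_1=v_1v_2$, $a_2=v_2v_3$, $a_3=v_3v_4$, $a_4=v_4v_5$, $a_5=v_1v_5$, $a_6=v_1v_8$, $a_7=v_2v_6$, $a_8=v_3v_6$, $a_9=v_4v_7$, $a_{10}=v_5v_8$, $a_{11}=v_6v_7$, $a_{12}=v_7v_8$. Let $\gamma_1=e_1+e_3+e_{10}+e_{11}$, $\gamma_2=e_2+e_4+e_6+e_{11}$, $\gamma_3=e_3+e_5+e_7+e_{12}$, $\gamma_4=e_2+e_5+e_6+e_7+e_8+2e_9+e_{10}$, $\gamma_5=e_2+e_3+e_5+e_6+e_7+e_9+e_{10}+e_{11}$, and for $(k_1,\dots,k_5)\in\mathbb{R}^5$ put $\gamma(k)=\sum_{i=1}^5k_i\gamma_i$. Consider the following properties of $(k_1,\dots,k_5)$, each of which includes $k_1,k_2,k_3,k_4\in\mathbb{N}$: $P_a$: $k_5\in\mathbb{N}$; $P_b$: $-k_5\in\mathbb{P}$ and $\min\{k_1,k_4\}\ge -k_5$; $P_{c_1}$: $-k_5\in\mathbb{P}$, $\min\{k_1,k_4\}<-k_5$, $k_1\ge k_4$; $P_{c_2}$: $-k_5\in\mathbb{P}$, $\min\{k_1,k_4\}<-k_5$, $k_1<k_4$, $2k_1+k_5\ge0$; $P_{c_3}$: $-k_5\in\mathbb{P}$, $\min\{k_1,k_4\}<-k_5$, $k_1<k_4$, $2k_1+k_5<0$. For each $h\in\{a,b,c_1,c_2,c_3\}$ define $(l_1,\dots,l_5)$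 from $(k_1,\dots,k_5)$ by: $h=a$: $(k_1,\ k_2,\ k_3,\ k_4,\ k_5)$; $h=b$: $(k_1+k_5,\ k_2,\ k_3,\ k_4+k_5,\ -k_5-1)$; $h=c_1$: $(k_1-k_4,\ k_2+k_4+k_5,\ k_3+k_4+k_5,\ -k_5-k_4-1,\ 2k_4+k_5)$; $h=c_2$: $(k_2+k_1+k_5,\ k_3+k_1+k_5,\ k_4-k_1-1,\ -k_5-k_1-1,\ 2k_1+k_5)$; $h=c_3$: $(k_2+k_1+k_5,\ k_3+k_1+k_5,\ k_4+k_1+k_5,\ k_1,\ -k_5-2k_1-1)$. Then for each $h$, the set $P_h(S(G_3))$ of $(k_1,\dots,k_5)\in\mathbb{R}^5$ with $\gamma(k)\in S(G_3)$ satisfying $P_h$ equals $\{(l_1,\dots,l_5)\in\mathbb{N}^5\}$ with the $l_i$ given above; that is, $(k_1,\dots,k_5)\in\mathbb{R}^5$ satisfies $\gamma(k)\in S(G_3)$ and $P_h$ if and only if the corresponding $l_1,\dots,l_5$ all lie in $\mathbb{N}$.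
   Context: For a finite graph $G$ with edges $a_1,\dots,a_n$, $S_{\mathbb{R}}(G)$ is the set of vectors $(\alpha_1,\dots,\alpha_n)\in\mathbb{R}^n$ (real labels on edges) such that for every vertex the sum of the labels of incident edges is the same number $s$; magic labellings form $S(G)=S_{\mathbb{R}}(G)\cap\mathbb{N}^n$. For $G_3$, every element of $S_{\mathbb{R}}(G_3)$ is uniquely of the form $\gamma(k)$. $e_i$ is the $i$-th unit vector of $\mathbb{R}^{12}$, $\mathbb{N}=\{0,1,2,\dots\}$, $\mathbb{P}=\{1,2,\dots\}$. *)

theory Defs
  imports Main Complex_Main
begin

text \<open>Vectors of \<real>^n are represented as real lists of length n; the i-th coordinate
(1-based, as in the paper) is the list entry at position i-1.
A finite graph is given by a vertex set and a list of edges (pairs of vertices);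
edge a_i is the (i-1)-th list entry.\<close>

definition magic_R :: "'v set \<Rightarrow> ('v \<times> 'v) list \<Rightarrow> real list set" where
  "magic_R V E = {\<alpha>. length \<alpha> = length E \<and>
     (\<exists>s. \<forall>v\<in>V. (\<Sum>i<length E. if v = fst (E!i) \<or> v = snd (E!i) then \<alpha>!i else 0) = s)}"

definition magic :: "'v set \<Rightarrow> ('v \<times> 'v) list \<Rightarrow> real list set" where
  "magic V E = {\<alpha> \<in> magic_R V E. \<forall>i<length \<alpha>. \<alpha>!i \<in> \<nat>}"

definition G3_vertices :: "nat set" where
  "G3_vertices = {1..8}"

definition G3_edges :: "(nat \<times> nat) list" where
  "G3_edges = [(1,2),(2,3),(3,4),(4,5),(1,5),(1,8),(2,6),(3,6),(4,7),(5,8),(6,7),(7,8)]"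

definition uvec :: "nat \<Rightarrow> real list" where
  "uvec i = map (\<lambda>j. if j = i then 1 else 0) [1..<13]"

definition vadd :: "real list \<Rightarrow> real list \<Rightarrow> real list" where
  "vadd x y = map2 (+) x y"

definition vscale :: "real \<Rightarrow> real list \<Rightarrow> real list" where
  "vscale c x = map ((*) c) x"

definition gamma1 :: "real list" where
  "gamma1 = vadd (uvec 1) (vadd (uvec 3) (vadd (uvec 10) (uvec 11)))"
definition gamma2 :: "real list" where
  "gamma2 = vadd (uvec 2) (vadd (uvec 4) (vadd (uvec 6) (uvec 11)))"
definition gamma3 :: "real list" where
  "gamma3 = vadd (uvec 3) (vadd (uvec 5) (vadd (uvec 7) (uvec 12)))"
definition gamma4 :: "real list" where
  "gamma4 = vadd (uvec 2) (vadd (uvec 5) (vadd (uvec 6) (vadd (uvec 7) (vadd (uvec 8)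
              (vadd (vscale 2 (uvec 9)) (uvec 10))))))"
definition gamma5 :: "real list" where
  "gamma5 = vadd (uvec 2) (vadd (uvec 3) (vadd (uvec 5) (vadd (uvec 6) (vadd (uvec 7)
              (vadd (uvec 9) (vadd (uvec 10) (uvec 11)))))))"

definition gamma :: "real \<Rightarrow> real \<Rightarrow> real \<Rightarrow> real \<Rightarrow> real \<Rightarrow> real list" where
  "gamma k1 k2 k3 k4 k5 = vadd (vscale k1 gamma1) (vadd (vscale k2 gamma2)
     (vadd (vscale k3 gamma3) (vadd (vscale k4 gamma4) (vscale k5 gamma5))))"

definition Pos :: "real set" where
  "Pos = {x. x \<in> \<nat> \<and> x \<ge> 1}"

definition P_base :: "real \<Rightarrow> real \<Rightarrow> real \<Rightarrow> real \<Rightarrow> bool" where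
  "P_base k1 k2 k3 k4 \<longleftrightarrow> k1 \<in> \<nat> \<and> k2 \<in> \<nat> \<and> k3 \<in> \<nat> \<and> k4 \<in> \<nat>"

definition P_a :: "real \<Rightarrow> real \<Rightarrow> real \<Rightarrow> real \<Rightarrow> real \<Rightarrow> bool" where
  "P_a k1 k2 k3 k4 k5 \<longleftrightarrow> P_base k1 k2 k3 k4 \<and> k5 \<in> \<nat>"
definition P_b :: "real \<Rightarrow> real \<Rightarrow> real \<Rightarrow> real \<Rightarrow> real \<Rightarrow> bool" where
  "P_b k1 k2 k3 k4 k5 \<longleftrightarrow> P_base k1 k2 k3 k4 \<and> -k5 \<in> Pos \<and> min k1 k4 \<ge> -k5"
definition P_c1 :: "real \<Rightarrow> real \<Rightarrow> real \<Rightarrow> real \<Rightarrow> real \<Rightarrow> bool" where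
  "P_c1 k1 k2 k3 k4 k5 \<longleftrightarrow> P_base k1 k2 k3 k4 \<and> -k5 \<in> Pos \<and> min k1 k4 < -k5 \<and> k1 \<ge> k4"
definition P_c2 :: "real \<Rightarrow> real \<Rightarrow> real \<Rightarrow> real \<Rightarrow> real \<Rightarrow> bool" where
  "P_c2 k1 k2 k3 k4 k5 \<longleftrightarrow> P_base k1 k2 k3 k4 \<and> -k5 \<in> Pos \<and> min k1 k4 < -k5 \<and> k1 < k4
      \<and> 2*k1 + k5 \<ge> 0"
definition P_c3 :: "real \<Rightarrow> real \<Rightarrow> real \<Rightarrow> real \<Rightarrow> real \<Rightarrow> bool" where
  "P_c3 k1 k2 k3 k4 k5 \<longleftrightarrow> P_base k1 k2 k3 k4 \<and> -k5 \<in> Pos \<and> min k1 k4 < -k5 \<and> k1 < k4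
      \<and> 2*k1 + k5 < 0"

definition all_nat :: "real list \<Rightarrow> bool" where
  "all_nat l \<longleftrightarrow> (\<forall>x\<in>set l. x \<in> \<nat>)"

end

theory Submission imports Defs begin
lemma gamma_eq: "gamma k1 k2 k3 k4 k5 = [k1, k2+k4+k5, k1+k3+k5, k2, k3+k4+k5, k2+k4+k5, k3+k4+k5, k4, 2*k4+k5, k1+k4+k5, k1+k2+k5, k3]"
  by (simp add: gamma_def gamma1_def gamma2_def gamma3_def gamma4_def gamma5_def uvec_def vadd_def vscale_def upt_rec algebra_simps)

lemma magR: "gamma k1 k2 k3 k4 k5 \<in> magic_R G3_vertices G3_edges"
  unfolding gamma_eq magic_R_def G3_vertices_def G3_edges_def
  apply (simp add: numeral_eq_Suc lessThan_Suc)
  apply (rule exI[of _ "k1+k2+k3+2*k4+2*k5"])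
  apply simp
  done

lemma mag_iff: "gamma k1 k2 k3 k4 k5 \<in> magic G3_vertices G3_edges \<longleftrightarrow>
  (\<forall>x\<in>set [k1, k2+k4+k5, k1+k3+k5, k2, k3+k4+k5, k2+k4+k5, k3+k4+k5, k4, 2*k4+k5, k1+k4+k5, k1+k2+k5, k3]. x \<in> \<nat>)"
  unfolding magic_def using magR[of k1 k2 k3 k4 k5]
  by (simp add: gamma_eq numeral_eq_Suc less_Suc_eq all_conj_distrib)

lemma ofint_nat: "(of_int e :: real) \<in> \<nat> \<longleftrightarrow> 0 \<le> e"
  by (simp add: Nats_altdef2)

lemma core:
  fixes i1 i2 i3 i4 i5 :: int
  defines "k1 \<equiv> real_of_int i1" and "k2 \<equiv> real_of_int i2" and "k3 \<equiv> real_of_int i3"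
    and "k4 \<equiv> real_of_int i4" and "k5 \<equiv> real_of_int i5"
  shows
   "(gamma k1 k2 k3 k4 k5 \<in> magic G3_vertices G3_edges \<and> P_a k1 k2 k3 k4 k5
       \<longleftrightarrow> all_nat [k1, k2, k3, k4, k5])
  \<and> (gamma k1 k2 k3 k4 k5 \<in> magic G3_vertices G3_edges \<and> P_b k1 k2 k3 k4 k5
       \<longleftrightarrow> all_nat [k1 + k5, k2, k3, k4 + k5, -k5 - 1])
  \<and> (gamma k1 k2 k3 k4 k5 \<in> magic G3_vertices G3_edges \<and> P_c1 k1 k2 k3 k4 k5
       \<longleftrightarrow> all_nat [k1 - k4, k2 + k4 + k5, k3 + k4 + k5, -k5 - k4 - 1, 2*k4 + k5])
  \<and> (gamma k1 k2 k3 k4 k5 \<in> magic G3_vertices G3_edges \<and> P_c2 k1 k2 k3 k4 k5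
       \<longleftrightarrow> all_nat [k2 + k1 + k5, k3 + k1 + k5, k4 - k1 - 1, -k5 - k1 - 1, 2*k1 + k5])
  \<and> (gamma k1 k2 k3 k4 k5 \<in> magic G3_vertices G3_edges \<and> P_c3 k1 k2 k3 k4 k5
       \<longleftrightarrow> all_nat [k2 + k1 + k5, k3 + k1 + k5, k4 + k1 + k5, k1, -k5 - 2*k1 - 1])"
  unfolding mag_iff all_nat_def P_a_def P_b_def P_c1_def P_c2_def P_c3_def P_base_def Pos_def
    k1_def k2_def k3_def k4_def k5_def
  apply (simp only: of_int_add[symmetric] of_int_diff[symmetric] of_int_minus[symmetric]
     of_int_mult[symmetric] of_int_numeral[where 'a=real, symmetric] of_int_1[where 'a=real, symmetric]
     of_int_0[where 'a=real, symmetric] of_int_le_iff of_int_less_iff min_def[where 'a=real]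
     ofint_nat set_simps ball_simps mem_Collect_eq)
  apply (simp only: of_int_le_iff of_int_less_iff split: if_split)
  apply arith
  done
theorem mainTheorem6:
  fixes k1 k2 k3 k4 k5 :: real
  shows
   "(gamma k1 k2 k3 k4 k5 \<in> magic G3_vertices G3_edges \<and> P_a k1 k2 k3 k4 k5
       \<longleftrightarrow> all_nat [k1, k2, k3, k4, k5])
  \<and> (gamma k1 k2 k3 k4 k5 \<in> magic G3_vertices G3_edges \<and> P_b k1 k2 k3 k4 k5
       \<longleftrightarrow> all_nat [k1 + k5, k2, k3, k4 + k5, -k5 - 1])
  \<and> (gamma k1 k2 k3 k4 k5 \<in> magic G3_vertices G3_edges \<and> P_c1 k1 k2 k3 k4 k5
       \<longleftrightarrow> all_nat [k1 - k4, k2 + k4 + k5, k3 + k4 + k5, -k5 - k4 - 1, 2*k4 + k5])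
  \<and> (gamma k1 k2 k3 k4 k5 \<in> magic G3_vertices G3_edges \<and> P_c2 k1 k2 k3 k4 k5
       \<longleftrightarrow> all_nat [k2 + k1 + k5, k3 + k1 + k5, k4 - k1 - 1, -k5 - k1 - 1, 2*k1 + k5])
  \<and> (gamma k1 k2 k3 k4 k5 \<in> magic G3_vertices G3_edges \<and> P_c3 k1 k2 k3 k4 k5
       \<longleftrightarrow> all_nat [k2 + k1 + k5, k3 + k1 + k5, k4 + k1 + k5, k1, -k5 - 2*k1 - 1])"
proof (cases "k1\<in>\<int> \<and> k2\<in>\<int> \<and> k3\<in>\<int> \<and> k4\<in>\<int> \<and> k5\<in>\<int>")
  case True
  then obtain i1 i2 i3 i4 i5 where "k1 = of_int i1" "k2 = of_int i2" "k3 = of_int i3"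
    "k4 = of_int i4" "k5 = of_int i5" by (auto elim!: Ints_cases)
  then show ?thesis using core[of i1 i2 i3 i4 i5] by simp
next
  case False
  have N: "\<And>x::real. x \<in> \<nat> \<Longrightarrow> x \<in> \<int>" using Nats_subset_Ints by blast
  have M: "\<And>x::real. -x \<in> \<nat> \<Longrightarrow> x \<in> \<int>" using N Ints_minus by fastforce
  have L: "\<not> P_a k1 k2 k3 k4 k5" "\<not> P_b k1 k2 k3 k4 k5" "\<not> P_c1 k1 k2 k3 k4 k5"
     "\<not> P_c2 k1 k2 k3 k4 k5" "\<not> P_c3 k1 k2 k3 k4 k5"
    using False N M unfolding P_a_def P_b_def P_c1_def P_c2_def P_c3_def P_base_def Pos_def
    by auto
  have Ra: "\<not> all_nat [k1, k2, k3, k4, k5]" using False N by (auto simp: all_nat_def)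
  have Rb: "\<not> all_nat [k1 + k5, k2, k3, k4 + k5, -k5 - 1]"
  proof
    assume "all_nat [k1 + k5, k2, k3, k4 + k5, -k5 - 1]"
    then have h: "k1 + k5 \<in> \<int>" "k2 \<in> \<int>" "k3 \<in> \<int>" "k4 + k5 \<in> \<int>" "-k5 - 1 \<in> \<int>"
      using N by (auto simp: all_nat_def)
    have 5: "k5 \<in> \<int>" using Ints_diff[OF Ints_minus[OF h(5)] Ints_1] by simp
    have "k1 \<in> \<int>" using Ints_diff[OF h(1) 5] by simp
    moreover have "k4 \<in> \<int>" using Ints_diff[OF h(4) 5] by simp
    ultimately show False using False h 5 by blast
  qed
  have Rc1: "\<not> all_nat [k1 - k4, k2 + k4 + k5, k3 + k4 + k5, -k5 - k4 - 1, 2*k4 + k5]"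
  proof
    assume "all_nat [k1 - k4, k2 + k4 + k5, k3 + k4 + k5, -k5 - k4 - 1, 2*k4 + k5]"
    then have h: "k1 - k4 \<in> \<int>" "k2 + k4 + k5 \<in> \<int>" "k3 + k4 + k5 \<in> \<int>" "-k5 - k4 - 1 \<in> \<int>" "2*k4 + k5 \<in> \<int>"
      using N by (auto simp: all_nat_def)
    have 4: "k4 \<in> \<int>" using Ints_add[OF Ints_add[OF h(4) h(5)] Ints_1] by simp
    have 5: "k5 \<in> \<int>" using Ints_diff[OF h(5) Ints_mult[OF Ints_numeral[of "num.Bit0 num.One"] 4]] by simp
    have "k1 \<in> \<int>" using Ints_add[OF h(1) 4] by simp
    moreover have "k2 \<in> \<int>" using Ints_diff[OF h(2) Ints_add[OF 4 5]] by simp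
    moreover have "k3 \<in> \<int>" using Ints_diff[OF h(3) Ints_add[OF 4 5]] by simp
    ultimately show False using False 4 5 by blast
  qed
  have Rc2: "\<not> all_nat [k2 + k1 + k5, k3 + k1 + k5, k4 - k1 - 1, -k5 - k1 - 1, 2*k1 + k5]"
  proof
    assume "all_nat [k2 + k1 + k5, k3 + k1 + k5, k4 - k1 - 1, -k5 - k1 - 1, 2*k1 + k5]"
    then have h: "k2 + k1 + k5 \<in> \<int>" "k3 + k1 + k5 \<in> \<int>" "k4 - k1 - 1 \<in> \<int>" "-k5 - k1 - 1 \<in> \<int>" "2*k1 + k5 \<in> \<int>"
      using N by (auto simp: all_nat_def)
    have 1: "k1 \<in> \<int>" using Ints_add[OF Ints_add[OF h(4) h(5)] Ints_1] by simp
    have 5: "k5 \<in> \<int>" using Ints_diff[OF h(5) Ints_mult[OF Ints_numeral[of "num.Bit0 num.One"] 1]] by simp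
    have "k4 \<in> \<int>" using Ints_add[OF Ints_add[OF h(3) 1] Ints_1] by simp
    moreover have "k2 \<in> \<int>" using Ints_diff[OF h(1) Ints_add[OF 1 5]] by simp
    moreover have "k3 \<in> \<int>" using Ints_diff[OF h(2) Ints_add[OF 1 5]] by simp
    ultimately show False using False 1 5 by blast
  qed
  have Rc3: "\<not> all_nat [k2 + k1 + k5, k3 + k1 + k5, k4 + k1 + k5, k1, -k5 - 2*k1 - 1]"
  proof
    assume "all_nat [k2 + k1 + k5, k3 + k1 + k5, k4 + k1 + k5, k1, -k5 - 2*k1 - 1]"
    then have h: "k2 + k1 + k5 \<in> \<int>" "k3 + k1 + k5 \<in> \<int>" "k4 + k1 + k5 \<in> \<int>" "k1 \<in> \<int>" "-k5 - 2*k1 - 1 \<in> \<int>"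
      using N by (auto simp: all_nat_def)
    have 5: "k5 \<in> \<int>" using Ints_minus[OF Ints_add[OF Ints_add[OF h(5) Ints_mult[OF Ints_numeral[of "num.Bit0 num.One"] h(4)]] Ints_1]] by simp
    have "k4 \<in> \<int>" using Ints_diff[OF h(3) Ints_add[OF h(4) 5]] by simp
    moreover have "k2 \<in> \<int>" using Ints_diff[OF h(1) Ints_add[OF h(4) 5]] by simp
    moreover have "k3 \<in> \<int>" using Ints_diff[OF h(2) Ints_add[OF h(4) 5]] by simp
    ultimately show False using False h(4) 5 by blast
  qed
  show ?thesis using L Ra Rb Rc1 Rc2 Rc3 by blast
qed

end
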